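(* Let $\tau>0$, let $\Gamma^0$ be a closed polyhedral surface with $\boldsymbol X^0\in[\mathbb K^0]^3$ the identity and $\mathcal H^0\in\mathbb K^0$ given. Suppose that for each $m\ge0$, $(\boldsymbol X^{m+1},V^{m+1},\mathcal H^{m+1})\in[\mathbb K^m]^3\times\mathbb K^m\times\mathbb K^m$ satisfies $$\Big(\tfrac{\boldsymbol X^{m+1}-\boldsymbol X^m}{\tau}\cdot\boldsymbol n^m,\phi^h\Big)^h_{\Gamma^m}=(V^{m+1},\phi^h)^h_{\Gamma^m}\quad\forall\phi^h\in\mathbb K^m,$$ $$(V^{m+1}\boldsymbol n^m,\boldsymbol\omega^h)^h_{\Gamma^m}=\Big\langle\mathcal H^{m+1}\mathbf A^m-\boldsymbol n^m(\nabla_\Gamma\mathcal H^{m+1})^T-\tfrac12(\mathcal H^{m+1})^2\nabla_\Gamma\boldsymbol X^{m+1},\nabla_\Gamma\boldsymbol\omega^h\Big\rangle^h_{\Gamma^m}\quad\forall\boldsymbol\omega^h\in[\mathbb K^m]^3,$$ $$(\mathcal H^{m+1}-\mathcal H^m,\varphi^h)^h_{\Gamma^m}=\big\langle\nabla_\Gamma(\boldsymbol X^{m+1}-\boldsymbol X^m),\boldsymbol n^m(\nabla_\Gamma\varphi^h)^T-\varphi^h\mathbf A^m\big\rangle^h_{\Gamma^m}\quad\forall\varphi^h\in\mathbb K^m,$$ and $\Gamma^{m+1}:=\boldsymbol X^{m+1}(\Gamma^m)$ is again a polyhedral surface with nondegenerate triangles. Then for every $\tau>0$ the discrete Willmore energy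 $W^m:=\frac12(\mathcal H^m,\mathcal H^m)^h_{\Gamma^m}$ satisfies $$W^{m+1}\le W^m\le W^0=\tfrac12(\mathcal H^0,\mathcal H^0)^h_{\Gamma^0}\qquad\forall m\ge0.$$
   Context: Polyhedral setting: $\Gamma^m=\bigcup_{j=1}^J\overline{\sigma_j^m}\subset\mathbb R^3$ is a closed polyhedral surface made of nonoverlapping nondegenerate triangles $\sigma_j^m$ with vertices $\boldsymbol q^m_{j_1},\boldsymbol q^m_{j_2},\boldsymbol q^m_{j_3}$, ordered so that $\mathcal J\{\sigma_j^m\}=(\boldsymbol q^m_{j_2}-\boldsymbol q^m_{j_1})\times(\boldsymbol q^m_{j_3}-\boldsymbol q^m_{j_1})$ points outward; $|\sigma_j^m|=\frac12|\mathcal J\{\sigma_j^m\}|$, and $\boldsymbol n^m|_{\sigma_j^m}=\mathcal J\{\sigma_j^m\}/|\mathcal J\{\sigma_j^m\}|$ (piecewise constant outward normal). $\mathbb K^m$ is the space of continuous functions on $\Gamma^m$ that are affine on each triangle. $\boldsymbol X^m\in[\mathbb K^m]^3$ is the identity on $\Gamma^m$; $\boldsymbol X^{m+1}\in[\mathbb K^m]^3$ parameterizes $\Gamma^{m+1}$ with triangles $\sigma_j^{m+1}=\boldsymbol X^{m+1}(\sigma_j^m)$ (same connectivity), so functions in $\mathbb K^m$ and $\mathbb K^{m+1}$ are identified through their vertex values. Discrete surface gradient on $\Gamma^m$: for a function $f$ with vertex values (equivalently its piecewise linear interpolant), on a triangle $\sigma=\{\boldsymbol q_1,\boldsymbol q_2,\boldsymbol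 q_3\}$ with normal $\boldsymbol n$, $$\nabla_\Gamma f|_\sigma=\frac{f(\boldsymbol q_1)(\boldsymbol q_2-\boldsymbol q_3)\times\boldsymbol n+f(\boldsymbol q_2)(\boldsymbol q_3-\boldsymbol q_1)\times\boldsymbol n+f(\boldsymbol q_3)(\boldsymbol q_1-\boldsymbol q_2)\times\boldsymbol n}{|\mathcal J\{\sigma\}|};$$ for vector functions $\nabla_\Gamma\boldsymbol f$ is the matrix with $i$-th row $(\nabla_\Gamma f_i)^T$. $\mathbf A^m=\nabla_\Gamma\boldsymbol w^m$ where $\boldsymbol w^m\in[\mathbb K^m]^3$ is a given (vertex unit normal) field. Mass-lumped inner products: for scalar/vector functions $u,v$ that are continuous on each closed triangle, $$(u,v)^h_{\Gamma^m}=\tfrac13\sum_{j=1}^J\sum_{k=1}^3|\sigma_j^m|\,u((\boldsymbol q^m_{j_k})^-)\cdot v((\boldsymbol q^m_{j_k})^-),$$ and for matrix functions $\langle\boldsymbol U,\boldsymbol V\rangle^h_{\Gamma^m}=\tfrac13\sum_j\sum_k|\sigma_j^m|\,\boldsymbol U((\boldsymbol q^m_{j_k})^-):\boldsymbol V((\boldsymbol q^m_{j_k})^-)$, where $g((\boldsymbol q)^-)$ is the limit of $g$ at vertex $\boldsymbol q$ from within $\sigma_j^m$, and $\boldsymbol U:\boldsymbol V=\mathrm{Tr}(\boldsymbol U^T\boldsymbol V)$. *)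

theory Defs
  imports "HOL-Analysis.Analysis"
begin

text \<open>
  A polyhedral surface with fixed connectivity is given by
  N vertices with positions P :: nat => real^3 (vertex index i < N),
  J triangles, and a connectivity map T :: nat => nat => nat, where
  T j k (j < J, k < 3) is the index of the (k+1)-th vertex of triangle j
  (k = 0,1,2 corresponds to q_{j_1}, q_{j_2}, q_{j_3}).
  Functions in the piecewise linear space K^m are identified with their
  vertex values (nat => real), vector functions with nat => real^3.
\<close>

definition tri_vert :: "(nat \<Rightarrow> real^3) \<Rightarrow> (nat \<Rightarrow> nat \<Rightarrow> nat) \<Rightarrow> nat \<Rightarrow> nat \<Rightarrow> real^3" where
  "tri_vert P T j k = P (T j k)"

definition tri_jac :: "(nat \<Rightarrow> real^3) \<Rightarrow> (nat \<Rightarrow> nat \<Rightarrow> nat) \<Rightarrow> nat \<Rightarrow> real^3" where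
  "tri_jac P T j = cross3 (tri_vert P T j 1 - tri_vert P T j 0) (tri_vert P T j 2 - tri_vert P T j 0)"

definition tri_area :: "(nat \<Rightarrow> real^3) \<Rightarrow> (nat \<Rightarrow> nat \<Rightarrow> nat) \<Rightarrow> nat \<Rightarrow> real" where
  "tri_area P T j = norm (tri_jac P T j) / 2"

definition tri_normal :: "(nat \<Rightarrow> real^3) \<Rightarrow> (nat \<Rightarrow> nat \<Rightarrow> nat) \<Rightarrow> nat \<Rightarrow> real^3" where
  "tri_normal P T j = (1 / norm (tri_jac P T j)) *\<^sub>R tri_jac P T j"

definition sgrad :: "(nat \<Rightarrow> real^3) \<Rightarrow> (nat \<Rightarrow> nat \<Rightarrow> nat) \<Rightarrow> nat \<Rightarrow> (nat \<Rightarrow> real) \<Rightarrow> real^3" where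
  "sgrad P T j f =
     (1 / norm (tri_jac P T j)) *\<^sub>R
       (f (T j 0) *\<^sub>R cross3 (tri_vert P T j 1 - tri_vert P T j 2) (tri_normal P T j)
      + f (T j 1) *\<^sub>R cross3 (tri_vert P T j 2 - tri_vert P T j 0) (tri_normal P T j)
      + f (T j 2) *\<^sub>R cross3 (tri_vert P T j 0 - tri_vert P T j 1) (tri_normal P T j))"

definition vgrad :: "(nat \<Rightarrow> real^3) \<Rightarrow> (nat \<Rightarrow> nat \<Rightarrow> nat) \<Rightarrow> nat \<Rightarrow> (nat \<Rightarrow> real^3) \<Rightarrow> real^3^3" where
  "vgrad P T j F = (\<chi> i. sgrad P T j (\<lambda>v. F v $ i))"

definition outer :: "real^3 \<Rightarrow> real^3 \<Rightarrow> real^3^3" where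
  "outer a b = (\<chi> i l. a $ i * b $ l)"

definition frob :: "real^3^3 \<Rightarrow> real^3^3 \<Rightarrow> real" where
  "frob U V = trace (transpose U ** V)"

text \<open>Mass-lumped inner products.  Arguments are given as functions of (j,k):
  the value at vertex q_{j_k} taken from within triangle sigma_j.\<close>
definition ip_s :: "(nat \<Rightarrow> real^3) \<Rightarrow> (nat \<Rightarrow> nat \<Rightarrow> nat) \<Rightarrow> nat \<Rightarrow>
    (nat \<Rightarrow> nat \<Rightarrow> real) \<Rightarrow> (nat \<Rightarrow> nat \<Rightarrow> real) \<Rightarrow> real" where
  "ip_s P T J u v = (1/3) * (\<Sum>j<J. \<Sum>k<3. tri_area P T j * (u j k * v j k))"

definition ip_v :: "(nat \<Rightarrow> real^3) \<Rightarrow> (nat \<Rightarrow> nat \<Rightarrow> nat) \<Rightarrow> nat \<Rightarrow>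
    (nat \<Rightarrow> nat \<Rightarrow> real^3) \<Rightarrow> (nat \<Rightarrow> nat \<Rightarrow> real^3) \<Rightarrow> real" where
  "ip_v P T J u v = (1/3) * (\<Sum>j<J. \<Sum>k<3. tri_area P T j * (u j k \<bullet> v j k))"

definition ip_m :: "(nat \<Rightarrow> real^3) \<Rightarrow> (nat \<Rightarrow> nat \<Rightarrow> nat) \<Rightarrow> nat \<Rightarrow>
    (nat \<Rightarrow> nat \<Rightarrow> real^3^3) \<Rightarrow> (nat \<Rightarrow> nat \<Rightarrow> real^3^3) \<Rightarrow> real" where
  "ip_m P T J U V = (1/3) * (\<Sum>j<J. \<Sum>k<3. tri_area P T j * frob (U j k) (V j k))"

definition polyhedral_surface :: "nat \<Rightarrow> nat \<Rightarrow> (nat \<Rightarrow> nat \<Rightarrow> nat) \<Rightarrow> (nat \<Rightarrow> real^3) \<Rightarrow> bool" where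
  "polyhedral_surface N J T P \<longleftrightarrow>
     0 < J \<and>
     (\<forall>j<J. \<forall>k<3. T j k < N) \<and>
     inj_on P {..<N} \<and>
     (\<forall>j<J. tri_jac P T j \<noteq> 0) \<and>
     (\<forall>j<J. \<forall>j'<J. j \<noteq> j' \<longrightarrow>
        rel_interior (convex hull {tri_vert P T j 0, tri_vert P T j 1, tri_vert P T j 2}) \<inter>
        rel_interior (convex hull {tri_vert P T j' 0, tri_vert P T j' 1, tri_vert P T j' 2}) = {})"

text \<open>Closed and outward oriented: every directed edge of a triangle occurs
  reversed in exactly one other triangle (closed, consistently oriented), and
  the enclosed signed volume is positive (orientation outward).\<close>
definition closed_oriented :: "nat \<Rightarrow> (nat \<Rightarrow> nat \<Rightarrow> nat) \<Rightarrow> (nat \<Rightarrow> real^3) \<Rightarrow> bool" where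
  "closed_oriented J T P \<longleftrightarrow>
     (\<forall>j<J. \<forall>k<3. \<exists>!(j',k'). j' < J \<and> k' < 3 \<and>
         T j' k' = T j ((k + 1) mod 3) \<and> T j' ((k' + 1) mod 3) = T j k) \<and>
     (\<Sum>j<J. tri_vert P T j 0 \<bullet> cross3 (tri_vert P T j 1) (tri_vert P T j 2)) > 0"

definition closed_polyhedral_surface :: "nat \<Rightarrow> nat \<Rightarrow> (nat \<Rightarrow> nat \<Rightarrow> nat) \<Rightarrow> (nat \<Rightarrow> real^3) \<Rightarrow> bool" where
  "closed_polyhedral_surface N J T P \<longleftrightarrow> polyhedral_surface N J T P \<and> closed_oriented J T P"

definition willmore :: "(nat \<Rightarrow> real^3) \<Rightarrow> (nat \<Rightarrow> nat \<Rightarrow> nat) \<Rightarrow> nat \<Rightarrow> (nat \<Rightarrow> real) \<Rightarrow> real" where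
  "willmore P T J H = (1/2) * ip_s P T J (\<lambda>j k. H (T j k)) (\<lambda>j k. H (T j k))"

end

theory Submission
  imports Defs
begin

lemma frob_expand: "frob U V = (\<Sum>i\<in>UNIV. \<Sum>l\<in>UNIV. U$i$l * V$i$l)"
proof -
  have "frob U V = (\<Sum>l\<in>UNIV. \<Sum>i\<in>UNIV. U$i$l * V$i$l)"
    unfolding frob_def trace_def matrix_matrix_mult_def transpose_def by simp
  also have "\<dots> = (\<Sum>i\<in>UNIV. \<Sum>l\<in>UNIV. U$i$l * V$i$l)" by (rule sum.swap)
  finally show ?thesis .
qed

lemma frob_sym: "frob U V = frob V U"
  unfolding frob_expand by (simp add: mult.commute)

lemma frob_diff_left: "frob (U - W) V = frob U V - frob W V"
  unfolding frob_expand by (simp add: left_diff_distrib sum_subtractf)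

lemma frob_add_left: "frob (U + W) V = frob U V + frob W V"
  unfolding frob_expand by (simp add: distrib_right sum.distrib)

lemma frob_scale_left: "frob (c *\<^sub>R U) V = c * frob U V"
  unfolding frob_expand by (simp add: sum_distrib_left mult.assoc)

lemma frob_outer: "frob (outer a b) (outer c d) = (a \<bullet> c) * (b \<bullet> d)"
proof -
  have "frob (outer a b) (outer c d) = (\<Sum>i\<in>UNIV. \<Sum>l\<in>UNIV. (a$i * c$i) * (b$l * d$l))"
    unfolding frob_expand outer_def by (simp add: mult_ac)
  also have "\<dots> = (a \<bullet> c) * (b \<bullet> d)"
    unfolding inner_vec_def sum_product by simp
  finally show ?thesis .
qed

lemma cross_lagrange: "(cross3 a c) \<bullet> (cross3 b d) = (a \<bullet> b) * (c \<bullet> d) - (a \<bullet> d) * (c \<bullet> b)"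
  by (simp add: cross3_simps)

lemma cross_comb:
  fixes q0 q1 q2 n :: "real^3"
  shows "f0 *\<^sub>R cross3 (q1 - q2) n + f1 *\<^sub>R cross3 (q2 - q0) n + f2 *\<^sub>R cross3 (q0 - q1) n
     = (f1 - f0) *\<^sub>R cross3 (q2 - q0) n - (f2 - f0) *\<^sub>R cross3 (q1 - q0) n"
proof -
  have a: "q1 - q2 = (q1 - q0) - (q2 - q0)" and b: "q0 - q1 = - (q1 - q0)" by simp_all
  show ?thesis unfolding a b
    by (simp add: Cross3.left_diff_distrib algebra_simps)
qed

lemma sgrad_formula:
  "sgrad P T j f = (1 / norm (tri_jac P T j)) *\<^sub>R
     ((f (T j 1) - f (T j 0)) *\<^sub>R cross3 (tri_vert P T j 2 - tri_vert P T j 0) (tri_normal P T j)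
    - (f (T j 2) - f (T j 0)) *\<^sub>R cross3 (tri_vert P T j 1 - tri_vert P T j 0) (tri_normal P T j))"
  unfolding sgrad_def cross_comb ..

lemma vgrad_formula:
  "vgrad P T j F = (1 / norm (tri_jac P T j)) *\<^sub>R
     (outer (F (T j 1) - F (T j 0)) (cross3 (tri_vert P T j 2 - tri_vert P T j 0) (tri_normal P T j))
    - outer (F (T j 2) - F (T j 0)) (cross3 (tri_vert P T j 1 - tri_vert P T j 0) (tri_normal P T j)))"
  unfolding vgrad_def outer_def sgrad_formula
  by (simp add: vec_eq_iff algebra_simps)

lemma frob_scale_right: "frob U (c *\<^sub>R V) = c * frob U V"
  by (metis frob_sym frob_scale_left)

lemma frob_diff_right: "frob U (V - W) = frob U V - frob U W"
  by (metis frob_sym frob_diff_left)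

lemma psd_form:
  fixes u v :: "real^3"
  assumes "\<alpha> > 0" "\<gamma>\<^sup>2 \<le> \<alpha> * \<beta>"
  shows "0 \<le> \<beta> * (u \<bullet> u) + \<alpha> * (v \<bullet> v) - 2 * \<gamma> * (u \<bullet> v)"
proof -
  have h1: "0 \<le> (\<alpha> *\<^sub>R v - \<gamma> *\<^sub>R u) \<bullet> (\<alpha> *\<^sub>R v - \<gamma> *\<^sub>R u)" by simp
  have h2: "0 \<le> (\<alpha> * \<beta> - \<gamma>\<^sup>2) * (u \<bullet> u)" using assms by simp
  have "\<alpha> * (\<beta> * (u \<bullet> u) + \<alpha> * (v \<bullet> v) - 2 * \<gamma> * (u \<bullet> v))
      = (\<alpha> *\<^sub>R v - \<gamma> *\<^sub>R u) \<bullet> (\<alpha> *\<^sub>R v - \<gamma> *\<^sub>R u) + (\<alpha> * \<beta> - \<gamma>\<^sup>2) * (u \<bullet> u)"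
    by (simp add: inner_diff_left inner_diff_right inner_commute algebra_simps power2_eq_square)
  then have "0 \<le> \<alpha> * (\<beta> * (u \<bullet> u) + \<alpha> * (v \<bullet> v) - 2 * \<gamma> * (u \<bullet> v))" using h1 h2 by linarith
  then show ?thesis using assms(1) by (simp add: zero_le_mult_iff)
qed

lemma disc_ineq:
  fixes \<alpha> \<beta> \<gamma> x y z :: real
  assumes "\<alpha> > 0" "\<gamma>\<^sup>2 \<le> \<alpha> * \<beta>"
  shows "4 * (\<alpha> * \<beta> - \<gamma>\<^sup>2) * (x * y - z\<^sup>2) \<le> (x * \<beta> + y * \<alpha> - 2 * z * \<gamma>)\<^sup>2"
proof -
  define u where "u = \<alpha> * \<beta> - \<gamma>\<^sup>2"
  define D where "D = x * \<beta> + y * \<alpha> - 2 * z * \<gamma>"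
  define w where "w = x * y - z\<^sup>2"
  define t where "t = - x / \<alpha>"
  have q: "(x + t * \<alpha>) * (y + t * \<beta>) - (z + t * \<gamma>)\<^sup>2 = w + t * D + t\<^sup>2 * u"
    unfolding u_def D_def w_def by (simp add: algebra_simps power2_eq_square)
  have xt: "x + t * \<alpha> = 0" using assms(1) unfolding t_def by simp
  have "w + t * D + t\<^sup>2 * u = (x + t * \<alpha>) * (y + t * \<beta>) - (z + t * \<gamma>)\<^sup>2" using q by simp
  also have "\<dots> = - (z + t * \<gamma>)\<^sup>2" unfolding xt by simp
  finally have qn: "w + t * D + t\<^sup>2 * u \<le> 0" by simp
  have u0: "u \<ge> 0" using assms unfolding u_def by simp
  have "4 * u * (w + t * D + t\<^sup>2 * u) = (2 * u * t + D)\<^sup>2 - (D\<^sup>2 - 4 * u * w)"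
    by (simp add: algebra_simps power2_eq_square)
  moreover have "4 * u * (w + t * D + t\<^sup>2 * u) \<le> 0" using u0 qn
    by (simp add: mult_nonneg_nonpos)
  ultimately have "D\<^sup>2 - 4 * u * w \<ge> 0" by (smt (verit) zero_le_power2)
  then show ?thesis unfolding u_def D_def w_def by simp
qed

lemma area_ineq:
  assumes J0: "tri_jac P T j \<noteq> 0"
  shows "tri_area P' T j \<le> tri_area P T j *
     (1 + frob (vgrad P T j P') (vgrad P T j P') - frob (vgrad P T j P') (vgrad P T j P))"
proof -
  define a where "a = tri_vert P T j 1 - tri_vert P T j 0"
  define b where "b = tri_vert P T j 2 - tri_vert P T j 0"
  define A where "A = tri_vert P' T j 1 - tri_vert P' T j 0"
  define B where "B = tri_vert P' T j 2 - tri_vert P' T j 0"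
  define L where "L = norm (tri_jac P T j)"
  define n where "n = tri_normal P T j"
  define ca where "ca = cross3 a n"
  define cb where "cb = cross3 b n"
  have Jd: "tri_jac P T j = cross3 a b" unfolding tri_jac_def a_def b_def ..
  have L0: "L > 0" using J0 unfolding L_def by simp
  have nd: "n = (1 / L) *\<^sub>R cross3 a b" unfolding n_def tri_normal_def L_def Jd ..
  have nn: "n \<bullet> n = 1" using L0 unfolding nd L_def Jd
    by (simp add: power2_norm_eq_inner[symmetric] power2_eq_square)
  have na: "n \<bullet> a = 0" and nb: "n \<bullet> b = 0" unfolding nd by (simp_all add: dot_cross_self)
  have cbcb: "cb \<bullet> cb = b \<bullet> b" unfolding cb_def cross_lagrange using nn nb by (simp add: inner_commute)
  have caca: "ca \<bullet> ca = a \<bullet> a" unfolding ca_def cross_lagrange using nn na by (simp add: inner_commute)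
  have cbca: "cb \<bullet> ca = a \<bullet> b" unfolding ca_def cb_def cross_lagrange using nn na nb by (simp add: inner_commute)
  have cacb: "ca \<bullet> cb = a \<bullet> b" using cbca by (simp add: inner_commute)
  have G: "vgrad P T j P' = (1 / L) *\<^sub>R (outer A cb - outer B ca)"
    unfolding vgrad_formula A_def B_def cb_def ca_def a_def b_def L_def n_def tri_vert_def ..
  have Q: "vgrad P T j P = (1 / L) *\<^sub>R (outer a cb - outer b ca)"
    unfolding vgrad_formula cb_def ca_def a_def b_def L_def n_def tri_vert_def ..
  define \<alpha> where "\<alpha> = a \<bullet> a"
  define \<beta> where "\<beta> = b \<bullet> b"
  define \<gamma> where "\<gamma> = a \<bullet> b"
  define D where "D = (A \<bullet> A) * \<beta> + (B \<bullet> B) * \<alpha> - 2 * (A \<bullet> B) * \<gamma>"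
  define Y where "Y = (A \<bullet> a) * \<beta> - (A \<bullet> b) * \<gamma> - (B \<bullet> a) * \<gamma> + (B \<bullet> b) * \<alpha>"
  have fGG: "frob (vgrad P T j P') (vgrad P T j P') = D / L\<^sup>2"
    unfolding G frob_scale_left frob_scale_right frob_diff_left frob_diff_right frob_outer
      cbcb caca cbca cacb D_def \<alpha>_def \<beta>_def \<gamma>_def
    using L0 by (simp add: inner_commute power2_eq_square field_simps)
  have fGQ: "frob (vgrad P T j P') (vgrad P T j P) = Y / L\<^sup>2"
    unfolding G Q frob_scale_left frob_scale_right frob_diff_left frob_diff_right frob_outer
      cbcb caca cbca cacb Y_def \<alpha>_def \<beta>_def \<gamma>_def
    using L0 by (simp add: inner_commute power2_eq_square field_simps)
  have LL: "L\<^sup>2 = \<alpha> * \<beta> - \<gamma>\<^sup>2"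
    using norm_cross_dot[of a b] unfolding L_def Jd \<alpha>_def \<beta>_def \<gamma>_def
    by (simp add: power_mult_distrib power2_norm_eq_inner)
  have ww: "(norm (cross3 A B))\<^sup>2 = (A \<bullet> A) * (B \<bullet> B) - (A \<bullet> B)\<^sup>2"
    using norm_cross_dot[of A B]
    by (simp add: power_mult_distrib power2_norm_eq_inner)
  have a0: "\<alpha> > 0"
  proof -
    have "a \<noteq> 0" using J0 Jd by auto
    then show ?thesis unfolding \<alpha>_def by simp
  qed
  have g: "\<gamma>\<^sup>2 \<le> \<alpha> * \<beta>" using LL by (smt (verit) zero_le_power2)
  have D0: "0 \<le> D" using psd_form[OF a0 g, of A B] unfolding D_def by (simp add: algebra_simps)
  have disc: "4 * L\<^sup>2 * (norm (cross3 A B))\<^sup>2 \<le> D\<^sup>2"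
    using disc_ineq[OF a0 g, of "A \<bullet> A" "B \<bullet> B" "A \<bullet> B"] unfolding LL ww D_def
    by (simp add: algebra_simps)
  have k1: "2 * (L * norm (cross3 A B)) \<le> D"
  proof (rule power2_le_imp_le[OF _ D0])
    show "(2 * (L * norm (cross3 A B)))\<^sup>2 \<le> D\<^sup>2" using disc by (simp add: power_mult_distrib)
  qed
  have k2: "0 \<le> L\<^sup>2 + D / 2 - Y"
  proof -
    have "0 \<le> \<beta> * ((A - a) \<bullet> (A - a)) + \<alpha> * ((B - b) \<bullet> (B - b)) - 2 * \<gamma> * ((A - a) \<bullet> (B - b))"
      by (rule psd_form[OF a0 g])
    also have "\<dots> = D - 2 * Y + 2 * L\<^sup>2"
      unfolding LL D_def Y_def \<alpha>_def \<beta>_def \<gamma>_def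
      by (simp add: inner_diff_left inner_diff_right inner_commute algebra_simps power2_eq_square)
    finally show ?thesis by simp
  qed
  have main: "L * norm (cross3 A B) \<le> L\<^sup>2 + D - Y" using k1 k2 by linarith
  have ar': "tri_area P' T j = norm (cross3 A B) / 2"
    unfolding tri_area_def tri_jac_def A_def B_def ..
  have ar: "tri_area P T j = L / 2" unfolding tri_area_def L_def ..
  have eq: "L / 2 * (1 + D / L\<^sup>2 - Y / L\<^sup>2) = (L\<^sup>2 + D - Y) / (2 * L)"
    using L0 by (simp add: field_simps power2_eq_square)
  have le: "norm (cross3 A B) / 2 \<le> (L\<^sup>2 + D - Y) / (2 * L)"
    using main L0 by (simp add: field_simps mult.commute)
  then have "norm (cross3 A B) / 2 \<le> L / 2 * (1 + D / L\<^sup>2 - Y / L\<^sup>2)" unfolding eq .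
  then show ?thesis unfolding ar ar' fGG fGQ .
qed

lemma vgrad_diff: "vgrad P T j (\<lambda>i. F i - F' i) = vgrad P T j F - vgrad P T j F'"
  unfolding vgrad_formula by (simp add: outer_def vec_eq_iff algebra_simps)

lemma comb_term: "a * frob (U1 - U2 - c *\<^sub>R G) (G - Q) + a * frob (G - Q) (U2 - U1)
   = - (a * (c * (frob G G - frob G Q)))"
proof -
  have "frob (U1 - U2 - c *\<^sub>R G) (G - Q) + frob (G - Q) (U2 - U1) = - (c * (frob G G - frob G Q))"
    using frob_sym[of U1 G] frob_sym[of U2 G]
    by (simp add: frob_diff_left frob_diff_right frob_scale_left frob_sym[of "G - Q"] frob_sym[of Q] right_diff_distrib)
  then show ?thesis by (metis distrib_left mult_minus_right)
qed

lemma tri_area_nonneg: "0 \<le> tri_area P T j" unfolding tri_area_def by simp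

theorem theorem3p1:
  fixes \<tau> :: real and N J :: nat and T :: "nat \<Rightarrow> nat \<Rightarrow> nat"
    and X :: "nat \<Rightarrow> nat \<Rightarrow> real^3"
    and V H :: "nat \<Rightarrow> nat \<Rightarrow> real"
    and w :: "nat \<Rightarrow> nat \<Rightarrow> real^3"
  assumes tau: "\<tau> > 0"
    and surf0: "closed_polyhedral_surface N J T (X 0)"
    and surf: "\<And>m. polyhedral_surface N J T (X (Suc m))"
    and wunit: "\<And>m i. i < N \<Longrightarrow> norm (w m i) = 1"
    and eq1: "\<And>m \<phi>. ip_s (X m) T J
        (\<lambda>j k. ((1/\<tau>) *\<^sub>R (X (Suc m) (T j k) - X m (T j k))) \<bullet> tri_normal (X m) T j)
        (\<lambda>j k. \<phi> (T j k))
      = ip_s (X m) T J (\<lambda>j k. V (Suc m) (T j k)) (\<lambda>j k. \<phi> (T j k))"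
    and eq2: "\<And>m \<omega>. ip_v (X m) T J
        (\<lambda>j k. V (Suc m) (T j k) *\<^sub>R tri_normal (X m) T j)
        (\<lambda>j k. \<omega> (T j k))
      = ip_m (X m) T J
        (\<lambda>j k. H (Suc m) (T j k) *\<^sub>R vgrad (X m) T j (w m)
               - outer (tri_normal (X m) T j) (sgrad (X m) T j (H (Suc m)))
               - ((1/2) * (H (Suc m) (T j k))\<^sup>2) *\<^sub>R vgrad (X m) T j (X (Suc m)))
        (\<lambda>j k. vgrad (X m) T j \<omega>)"
    and eq3: "\<And>m \<phi>. ip_s (X m) T J
        (\<lambda>j k. H (Suc m) (T j k) - H m (T j k))
        (\<lambda>j k. \<phi> (T j k))
      = ip_m (X m) T J
        (\<lambda>j k. vgrad (X m) T j (\<lambda>i. X (Suc m) i - X m i))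
        (\<lambda>j k. outer (tri_normal (X m) T j) (sgrad (X m) T j \<phi>)
               - \<phi> (T j k) *\<^sub>R vgrad (X m) T j (w m))"
  shows "\<forall>m. willmore (X (Suc m)) T J (H (Suc m)) \<le> willmore (X m) T J (H m)
             \<and> willmore (X m) T J (H m) \<le> willmore (X 0) T J (H 0)"
proof -
  have surfm: "polyhedral_surface N J T (X m)" for m
    using surf0 surf by (cases m) (auto simp: closed_polyhedral_surface_def)
  have jac: "j < J \<Longrightarrow> tri_jac (X m) T j \<noteq> 0" for m j
    using surfm[of m] unfolding polyhedral_surface_def by blast
  have step: "willmore (X (Suc m)) T J (H (Suc m)) \<le> willmore (X m) T J (H m)" for m
  proof -
    define ar where "ar = (\<lambda>j. tri_area (X m) T j)"
    define ar' where "ar' = (\<lambda>j. tri_area (X (Suc m)) T j)"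
    define G where "G = (\<lambda>j. vgrad (X m) T j (X (Suc m)))"
    define Q where "Q = (\<lambda>j. vgrad (X m) T j (X m))"
    define nm where "nm = (\<lambda>j. tri_normal (X m) T j)"
    define Hn where "Hn = H (Suc m)"
    define Ho where "Ho = H m"
    define Vn where "Vn = V (Suc m)"
    define d where "d = (\<lambda>i. X (Suc m) i - X m i)"
    define SV where "SV = (\<Sum>j<J. \<Sum>k<3. ar j * (Vn (T j k) * Vn (T j k)))"
    define SH where "SH = (\<Sum>j<J. \<Sum>k<3. ar j * ((Hn (T j k) - Ho (T j k)) * Hn (T j k)))"
    define E where "E = (\<lambda>j k. ar j * ((1/2) * (Hn (T j k))\<^sup>2 * (frob (G j) (G j) - frob (G j) (Q j))))"
    have SV0: "0 \<le> SV" unfolding SV_def ar_def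
      by (intro sum_nonneg) (simp add: tri_area_nonneg)
    have e1: "(\<Sum>j<J. \<Sum>k<3. ar j * ((((1/\<tau>) *\<^sub>R d (T j k)) \<bullet> nm j) * Vn (T j k))) = SV"
      using eq1[of m Vn] unfolding ip_s_def SV_def ar_def nm_def d_def Vn_def by simp
    have e2: "(\<Sum>j<J. \<Sum>k<3. ar j * ((Vn (T j k) *\<^sub>R nm j) \<bullet> d (T j k)))
      = (\<Sum>j<J. \<Sum>k<3. ar j * frob (Hn (T j k) *\<^sub>R vgrad (X m) T j (w m)
               - outer (nm j) (sgrad (X m) T j Hn)
               - ((1/2) * (Hn (T j k))\<^sup>2) *\<^sub>R G j) (G j - Q j))"
      using eq2[of m d] unfolding ip_v_def ip_m_def ar_def nm_def d_def Vn_def Hn_def G_def Q_def vgrad_diff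
      by simp
    have e3: "SH = (\<Sum>j<J. \<Sum>k<3. ar j * frob (G j - Q j)
               (outer (nm j) (sgrad (X m) T j Hn) - Hn (T j k) *\<^sub>R vgrad (X m) T j (w m)))"
      using eq3[of m Hn] unfolding ip_s_def ip_m_def SH_def ar_def nm_def Hn_def Ho_def G_def Q_def vgrad_diff
      by simp
    have l2: "(\<Sum>j<J. \<Sum>k<3. ar j * ((Vn (T j k) *\<^sub>R nm j) \<bullet> d (T j k))) = \<tau> * SV"
      unfolding e1[symmetric] sum_distrib_left
      by (intro sum.cong refl) (use tau in \<open>simp add: inner_commute\<close>)
    have comb: "\<tau> * SV + SH = - (\<Sum>j<J. \<Sum>k<3. E j k)"
      unfolding l2[symmetric] e2 e3 E_def sum.distrib[symmetric] sum_negf[symmetric]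
      by (intro sum.cong refl) (rule comb_term)
    have pt: "(1/2) * (ar' j * (Hn (T j k) * Hn (T j k))) - (1/2) * (ar j * (Ho (T j k) * Ho (T j k)))
        \<le> E j k + ar j * ((Hn (T j k) - Ho (T j k)) * Hn (T j k))" if "j < J" for j k
    proof -
      have a: "ar' j \<le> ar j * (1 + frob (G j) (G j) - frob (G j) (Q j))"
        unfolding ar_def ar'_def G_def Q_def by (rule area_ineq[OF jac[OF that]])
      have b: "ar' j * (Hn (T j k) * Hn (T j k)) \<le> ar j * (1 + frob (G j) (G j) - frob (G j) (Q j)) * (Hn (T j k) * Hn (T j k))"
        by (rule mult_right_mono[OF a]) simp
      have c: "0 \<le> ar j * (Hn (T j k) - Ho (T j k))\<^sup>2" unfolding ar_def by (simp add: tri_area_nonneg)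
      have c2: "ar j * (Hn (T j k) * Ho (T j k)) \<le> (1/2) * (ar j * (Hn (T j k) * Hn (T j k))) + (1/2) * (ar j * (Ho (T j k) * Ho (T j k)))"
        using c by (simp add: algebra_simps power2_eq_square)
      have b2: "ar' j * (Hn (T j k) * Hn (T j k)) \<le> ar j * (Hn (T j k) * Hn (T j k)) + ar j * (Hn (T j k) * Hn (T j k)) * (frob (G j) (G j) - frob (G j) (Q j))"
        using b by (simp add: algebra_simps)
      have e: "E j k = (1/2) * (ar j * (Hn (T j k) * Hn (T j k)) * (frob (G j) (G j) - frob (G j) (Q j)))"
        unfolding E_def by (simp add: field_simps power2_eq_square)
      have f: "ar j * ((Hn (T j k) - Ho (T j k)) * Hn (T j k)) = ar j * (Hn (T j k) * Hn (T j k)) - ar j * (Hn (T j k) * Ho (T j k))"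
        by (simp add: algebra_simps)
      show ?thesis unfolding e f using b2 c2 by linarith
    qed
    have "(\<Sum>j<J. \<Sum>k<3. (1/2) * (ar' j * (Hn (T j k) * Hn (T j k))) - (1/2) * (ar j * (Ho (T j k) * Ho (T j k))))
       \<le> (\<Sum>j<J. \<Sum>k<3. E j k + ar j * ((Hn (T j k) - Ho (T j k)) * Hn (T j k)))"
      using pt by (intro sum_mono) auto
    also have "\<dots> = (\<Sum>j<J. \<Sum>k<3. E j k) + SH" unfolding SH_def sum.distrib ..
    also have "\<dots> \<le> 0" using comb SV0 tau by (smt (verit) mult_nonneg_nonneg)
    finally have fin: "(\<Sum>j<J. \<Sum>k<3. (1/2) * (ar' j * (Hn (T j k) * Hn (T j k))))
       - (\<Sum>j<J. \<Sum>k<3. (1/2) * (ar j * (Ho (T j k) * Ho (T j k)))) \<le> 0"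
      unfolding sum_subtractf .
    show ?thesis unfolding willmore_def ip_s_def
      using fin unfolding ar_def ar'_def Hn_def Ho_def sum_distrib_left[symmetric] by simp
  qed
  show ?thesis
  proof
    fix m
    have "willmore (X m) T J (H m) \<le> willmore (X 0) T J (H 0)"
    proof (induction m)
      case (Suc m) then show ?case using step[of m] by linarith
    qed simp
    then show "willmore (X (Suc m)) T J (H (Suc m)) \<le> willmore (X m) T J (H m)
             \<and> willmore (X m) T J (H m) \<le> willmore (X 0) T J (H 0)" using step[of m] by simp
  qed
qed

end
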